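(* Let $0\le j<n$ and let $(\mu^k)_{k\ge0}$ be the $\lambda^{j^*}$-building functions. For every transition $\mathbf e=(c,w,c')\in\mathcal E_j$ and every $i\in[n]$, $\mu^{|V|}_i(\mathbf e)\le|V|\cdot\kappa$, where $\kappa=\max_{e\in E}\ell_e(n)$.
   Context: Dynamic NCG $(\mathcal A,n)$: arena $\mathcal A=(V,E,\mathsf{src},\mathsf{tgt})$, $V$ finite, $E$ a partial function from $V\times V$ to non-decreasing piecewise-affine functions $\mathbb N\to\mathbb N$ (edge $e$ has cost $\ell_e$); $\mathsf{tgt}$ has only a self-loop of cost $0$ and is reachable from all states; players $[n]$. Configurations are maps $[n]\to V$; $c_{\mathsf{tgt}}$ maps all to $\mathsf{tgt}$. A move vector $(e_i)_i$ from $c$ gives the transition $(c,w,c')$, $c'(i)$ the target of $e_i$, $w(i)=\ell_{e_i}(u_i)$ with $u_i=|\{l:e_l=e_i\}|$; $\mathrm{cost}_i(c,c')=w(i)$; $T$ is the set of transitions; $c\Rightarrow c'$ means $(c,w,c')\in T$. For a path $\rho=(t_k)$, $\rho_{\ge k}$ is its suffix from $t_k$ and $\mathrm{cost}_i(\rho)$ the total payment of $i$. $\mathrm{dev}_i(c,c')=\{c''\mid c\Rightarrow c'',\ c''(l)=c'(l)\ \forall l\ne i\}$. $X_m$: configurations with exactly $m$ players at $\mathsf{tgt}$; $X_{\ge m}=\bigcup_{m'\ge m}X_{m'}$; $\mathcal E_m$, $\mathcal E_{\ge m}$: transitions $(c,w,c')$ with $c\in X_m$, resp. $c\in X_{\ge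 m}$. For $\lambda=(\lambda_i)$, $\lambda_i:\mathcal E_{\ge m}\to\mathbb N\cup\{\pm\infty\}$, and $c\in X_{\ge m}$, $\Lambda_\lambda(c)$ is the set of paths $\rho=(t_k)$ from $c$ visiting $c_{\mathsf{tgt}}$ with $\mathrm{cost}_i(\rho_{\ge k})\le\lambda_i(t_k)$ for all $i,k$. Define $\lambda^{n^*}_i(c_{\mathsf{tgt}},0^n,c_{\mathsf{tgt}})=0$; for $j<n$ the $\lambda^{j^*}$-building functions $\mu^k_i:\mathcal E_{\ge j}\to\mathbb N\cup\{\pm\infty\}$ are: $\mu^k_i=\lambda^{(j+1)^*}_i$ on $\mathcal E_{\ge j+1}$; for $\mathbf e=(c,w,c')\in\mathcal E_j$, $\mu^0_i(\mathbf e)=0$ if $c(i)=\mathsf{tgt}$ else $+\infty$; for $k>0$, $\mu^k_i(\mathbf e)=0$ if $c(i)=\mathsf{tgt}$, otherwise $\min_{c''\in\mathrm{dev}_i(c,c')}\sup_{\rho\in\Lambda_{\mu^{k-1}}(c'')}(\mathrm{cost}_i(c,c'')+\mathrm{cost}_i(\rho))$ if $\Lambda_{\mu^{k-1}}(\tilde c)\ne\emptyset$ for all $(c,\tilde w,\tilde c)\in T$, and $-\infty$ otherwise; $\lambda^{j^*}$ is the pointwise limit of $(\mu^k)_k$. *)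

theory Defs
  imports Complex_Main "HOL-Library.FuncSet" "HOL-Library.Extended_Real"
begin

text \<open>Players are 0..<n. Configurations are extensional maps from the players to V.
 A transition is a triple (c, w, c') encoded as (c, (w, c')).\<close>

type_synonym 'v config = "nat \<Rightarrow> 'v"
type_synonym 'v trans = "'v config \<times> (nat \<Rightarrow> nat) \<times> 'v config"

definition tsrc :: "'v trans \<Rightarrow> 'v config" where "tsrc t = fst t"
definition tw :: "'v trans \<Rightarrow> nat \<Rightarrow> nat" where "tw t = fst (snd t)"
definition tdst :: "'v trans \<Rightarrow> 'v config" where "tdst t = snd (snd t)"

text \<open>Piecewise affine with finitely many pieces: a finite set B of breakpoints such that
 on every interval not crossing a breakpoint any three points are collinear.\<close>
definition piecewise_affine :: "(nat \<Rightarrow> nat) \<Rightarrow> bool" where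
  "piecewise_affine f \<longleftrightarrow> (\<exists>B::nat set. finite B \<and>
     (\<forall>x y z. x < y \<and> y < z \<and> (\<forall>b\<in>B. \<not> (x < b \<and> b \<le> z)) \<longrightarrow>
        (int (f y) - int (f x)) * (int z - int y) = (int (f z) - int (f y)) * (int y - int x)))"

definition arena :: "'v set \<Rightarrow> ('v \<Rightarrow> 'v \<Rightarrow> (nat \<Rightarrow> nat) option) \<Rightarrow> 'v \<Rightarrow> 'v \<Rightarrow> bool" where
  "arena V E src tgt \<longleftrightarrow> finite V \<and> src \<in> V \<and> tgt \<in> V \<and>
     (\<forall>u v. E u v \<noteq> None \<longrightarrow> u \<in> V \<and> v \<in> V) \<and>
     (\<forall>u v f. E u v = Some f \<longrightarrow> mono f \<and> piecewise_affine f) \<and>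
     E tgt tgt = Some (\<lambda>_. 0) \<and> (\<forall>v. E tgt v \<noteq> None \<longrightarrow> v = tgt) \<and>
     (\<forall>v\<in>V. (v, tgt) \<in> {(u, v). E u v \<noteq> None}\<^sup>*)"

definition configs :: "'v set \<Rightarrow> nat \<Rightarrow> 'v config set" where
  "configs V n = {0..<n} \<rightarrow>\<^sub>E V"

definition ctgt :: "'v \<Rightarrow> nat \<Rightarrow> 'v config" where
  "ctgt tgt n = restrict (\<lambda>_. tgt) {0..<n}"

text \<open>Cost for player i of the (unique) move vector from c to c'; the edge of a player
 is determined by its source and target, and u_i counts players using the same edge.\<close>
definition step_cost :: "('v \<Rightarrow> 'v \<Rightarrow> (nat \<Rightarrow> nat) option) \<Rightarrow> nat \<Rightarrow> 'v config \<Rightarrow> 'v config \<Rightarrow> nat \<Rightarrow> nat" where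
  "step_cost E n c c' i = the (E (c i) (c' i)) (card {l\<in>{0..<n}. c l = c i \<and> c' l = c' i})"

definition transitions :: "'v set \<Rightarrow> ('v \<Rightarrow> 'v \<Rightarrow> (nat \<Rightarrow> nat) option) \<Rightarrow> nat \<Rightarrow> 'v trans set" where
  "transitions V E n = {(c, w, c'). c \<in> configs V n \<and> c' \<in> configs V n \<and>
      (\<forall>i\<in>{0..<n}. E (c i) (c' i) \<noteq> None) \<and> w = restrict (step_cost E n c c') {0..<n}}"

definition numtgt :: "'v \<Rightarrow> nat \<Rightarrow> 'v config \<Rightarrow> nat" where
  "numtgt tgt n c = card {i\<in>{0..<n}. c i = tgt}"

definition dev :: "'v set \<Rightarrow> ('v \<Rightarrow> 'v \<Rightarrow> (nat \<Rightarrow> nat) option) \<Rightarrow> nat \<Rightarrow> nat \<Rightarrow> 'v config \<Rightarrow> 'v config \<Rightarrow> 'v config set" where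
  "dev V E n i c c' = {c''. (\<exists>w. (c, w, c'') \<in> transitions V E n) \<and>
      (\<forall>l\<in>{0..<n}. l \<noteq> i \<longrightarrow> c'' l = c' l)}"

definition is_path :: "'v set \<Rightarrow> ('v \<Rightarrow> 'v \<Rightarrow> (nat \<Rightarrow> nat) option) \<Rightarrow> nat \<Rightarrow> 'v config \<Rightarrow> (nat \<Rightarrow> 'v trans) \<Rightarrow> bool" where
  "is_path V E n c \<rho> \<longleftrightarrow> tsrc (\<rho> 0) = c \<and> (\<forall>k. \<rho> k \<in> transitions V E n \<and> tdst (\<rho> k) = tsrc (\<rho> (Suc k)))"

definition path_cost :: "nat \<Rightarrow> (nat \<Rightarrow> 'v trans) \<Rightarrow> nat \<Rightarrow> ereal" where
  "path_cost i \<rho> k = (SUP N. ereal (real (\<Sum>m\<in>{k..<N}. tw (\<rho> m) i)))"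

definition Lambda :: "'v set \<Rightarrow> ('v \<Rightarrow> 'v \<Rightarrow> (nat \<Rightarrow> nat) option) \<Rightarrow> 'v \<Rightarrow> nat \<Rightarrow>
     (nat \<Rightarrow> 'v trans \<Rightarrow> ereal) \<Rightarrow> 'v config \<Rightarrow> (nat \<Rightarrow> 'v trans) set" where
  "Lambda V E tgt n lam c = {\<rho>. is_path V E n c \<rho> \<and> (\<exists>k. tsrc (\<rho> k) = ctgt tgt n) \<and>
      (\<forall>i\<in>{0..<n}. \<forall>k. path_cost i \<rho> k \<le> lam i (\<rho> k))}"

text \<open>The lambda^{j*}-building functions mu^k, given lamnext = lambda^{(j+1)*}.\<close>
fun mu :: "'v set \<Rightarrow> ('v \<Rightarrow> 'v \<Rightarrow> (nat \<Rightarrow> nat) option) \<Rightarrow> 'v \<Rightarrow> nat \<Rightarrow> nat \<Rightarrow>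
     (nat \<Rightarrow> 'v trans \<Rightarrow> ereal) \<Rightarrow> nat \<Rightarrow> nat \<Rightarrow> 'v trans \<Rightarrow> ereal" where
  "mu V E tgt n j lamnext 0 i e =
     (if numtgt tgt n (tsrc e) \<ge> Suc j then lamnext i e
      else if tsrc e i = tgt then 0 else \<infinity>)"
| "mu V E tgt n j lamnext (Suc k) i e =
     (if numtgt tgt n (tsrc e) \<ge> Suc j then lamnext i e
      else if tsrc e i = tgt then 0
      else if (\<forall>t\<in>transitions V E n. tsrc t = tsrc e \<longrightarrow>
                  Lambda V E tgt n (mu V E tgt n j lamnext k) (tdst t) \<noteq> {})
      then Min ((\<lambda>c''. SUP \<rho>\<in>Lambda V E tgt n (mu V E tgt n j lamnext k) c''.
                   ereal (real (step_cost E n (tsrc e) c'' i)) + path_cost i \<rho> 0)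
                ` dev V E n i (tsrc e) (tdst e))
      else -\<infinity>)"

text \<open>lambda^{(n-d)*}, by recursion on d; lambda^{n*} is 0 (on its only transition).\<close>
fun lamstar_aux :: "'v set \<Rightarrow> ('v \<Rightarrow> 'v \<Rightarrow> (nat \<Rightarrow> nat) option) \<Rightarrow> 'v \<Rightarrow> nat \<Rightarrow> nat \<Rightarrow>
     nat \<Rightarrow> 'v trans \<Rightarrow> ereal" where
  "lamstar_aux V E tgt n 0 = (\<lambda>i e. 0)"
| "lamstar_aux V E tgt n (Suc d) =
     (\<lambda>i e. lim (\<lambda>k. mu V E tgt n (n - Suc d) (lamstar_aux V E tgt n d) k i e))"

definition lamstar :: "'v set \<Rightarrow> ('v \<Rightarrow> 'v \<Rightarrow> (nat \<Rightarrow> nat) option) \<Rightarrow> 'v \<Rightarrow> nat \<Rightarrow> nat \<Rightarrow>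
     nat \<Rightarrow> 'v trans \<Rightarrow> ereal" where
  "lamstar V E tgt n j = lamstar_aux V E tgt n (n - j)"

definition kappa :: "'v set \<Rightarrow> ('v \<Rightarrow> 'v \<Rightarrow> (nat \<Rightarrow> nat) option) \<Rightarrow> nat \<Rightarrow> nat" where
  "kappa V E n = Max {the (E u v) n | u v. u \<in> V \<and> v \<in> V \<and> E u v \<noteq> None}"

end

theory Submission imports Defs begin

lemma short_path_bound:
  assumes fin: "finite V" and RV: "R \<subseteq> V \<times> V" and v: "v \<in> V"
    and p: "(v, t) \<in> R ^^ d" and mind: "\<forall>d'<d. (v, t) \<notin> R ^^ d'"
  shows "d < card V"
proof -
  from p obtain f where f0: "f 0 = v" and fd: "f d = t" and fe: "\<forall>i<d. (f i, f (Suc i)) \<in> R"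
    unfolding relpow_fun_conv by blast
  have inj: "inj_on f {0..d}"
  proof (rule ccontr)
    assume "\<not> inj_on f {0..d}"
    then obtain p q where pq: "p < q" "q \<le> d" "f p = f q"
      unfolding inj_on_def by (metis atLeastAtMost_iff linorder_neqE_nat)
    define g where "g x = (if x \<le> p then f x else f (x + (q - p)))" for x
    have "(v, t) \<in> R ^^ (d - (q - p))"
      unfolding relpow_fun_conv
    proof (intro exI conjI allI impI)
      show "g 0 = v" using f0 by (simp add: g_def)
      show "g (d - (q - p)) = t"
      proof (cases "d - (q - p) \<le> p")
        case True
        then have "q = d" "d - (q - p) = p" using pq by auto
        then show ?thesis using pq fd by (simp add: g_def)
      next
        case False
        then show ?thesis using pq fd by (simp add: g_def)
      qed
      fix i assume i: "i < d - (q - p)"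
      show "(g i, g (Suc i)) \<in> R"
      proof (cases "Suc i \<le> p")
        case True then show ?thesis using fe pq by (simp add: g_def)
      next
        case False
        show ?thesis
        proof (cases "i = p")
          case True
          then have "g i = f q" "g (Suc i) = f (Suc q)" using pq by (auto simp: g_def)
          then show ?thesis using fe pq i True by auto
        next
          case False
          with \<open>\<not> Suc i \<le> p\<close> have "g i = f (i + (q - p))" "g (Suc i) = f (Suc (i + (q - p)))"
            by (auto simp: g_def)
          then show ?thesis using fe i pq by auto
        qed
      qed
    qed
    moreover have "d - (q - p) < d" using pq by auto
    ultimately show False using mind by blast
  qed
  have sub: "f ` {0..d} \<subseteq> V"
  proof
    fix x assume "x \<in> f ` {0..d}"
    then obtain i where i: "i \<le> d" "x = f i" by auto
    show "x \<in> V"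
    proof (cases i)
      case 0 then show ?thesis using i f0 v by simp
    next
      case (Suc m)
      then have "(f m, f (Suc m)) \<in> R" using i fe by auto
      then show ?thesis using i Suc RV by auto
    qed
  qed
  have "card (f ` {0..d}) = Suc d" using inj by (simp add: card_image)
  moreover have "card (f ` {0..d}) \<le> card V" using card_mono[OF fin sub] .
  ultimately show ?thesis by simp
qed

definition Rel :: "('v \<Rightarrow> 'v \<Rightarrow> (nat \<Rightarrow> nat) option) \<Rightarrow> ('v \<times> 'v) set" where
  "Rel E = {(u, v). E u v \<noteq> None}"

definition dst :: "('v \<Rightarrow> 'v \<Rightarrow> (nat \<Rightarrow> nat) option) \<Rightarrow> 'v \<Rightarrow> 'v \<Rightarrow> nat" where
  "dst E tgt v = (LEAST d. (v, tgt) \<in> Rel E ^^ d)"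

lemma dst_path:
  assumes "arena V E src tgt" "v \<in> V"
  shows "(v, tgt) \<in> Rel E ^^ dst E tgt v"
proof -
  have "(v, tgt) \<in> (Rel E)\<^sup>*" using assms unfolding arena_def Rel_def by blast
  then obtain d where "(v, tgt) \<in> Rel E ^^ d" using rtrancl_power by blast
  then show ?thesis unfolding dst_def by (rule LeastI)
qed

lemma dst_lt:
  assumes "arena V E src tgt" "v \<in> V"
  shows "dst E tgt v < card V"
proof (rule short_path_bound[OF _ _ assms(2) dst_path[OF assms]])
  show "finite V" using assms unfolding arena_def by auto
  show "Rel E \<subseteq> V \<times> V" using assms unfolding arena_def Rel_def by auto
  show "\<forall>d'<dst E tgt v. (v, tgt) \<notin> Rel E ^^ d'"
    unfolding dst_def using not_less_Least by blast
qed

lemma dst_zero: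
  assumes "arena V E src tgt" "v \<in> V" "dst E tgt v = 0"
  shows "v = tgt"
  using dst_path[OF assms(1,2)] assms(3) by simp

lemma dst_step:
  assumes "arena V E src tgt" "v \<in> V" "v \<noteq> tgt"
  shows "\<exists>u. E v u \<noteq> None \<and> u \<in> V \<and> Suc (dst E tgt u) \<le> dst E tgt v"
proof -
  have p: "(v, tgt) \<in> Rel E ^^ dst E tgt v" by (rule dst_path[OF assms(1,2)])
  have "dst E tgt v \<noteq> 0" using dst_zero[OF assms(1,2)] assms(3) by auto
  then obtain m where m: "dst E tgt v = Suc m" by (cases "dst E tgt v") auto
  with p obtain u where u: "(v, u) \<in> Rel E" "(u, tgt) \<in> Rel E ^^ m"
    using relpow_Suc_D2 by metis
  have "dst E tgt u \<le> m" unfolding dst_def using u(2) by (rule Least_le)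
  moreover have "u \<in> V" using u(1) assms(1) unfolding arena_def Rel_def by auto
  ultimately show ?thesis using u(1) m unfolding Rel_def by auto
qed

lemma kappa_bound:
  assumes "arena V E src tgt" "v \<in> V" "u \<in> V" "E v u = Some f" "m \<le> n"
  shows "f m \<le> kappa V E n"
proof -
  have mono: "mono f" using assms unfolding arena_def by blast
  have fin: "finite V" using assms unfolding arena_def by blast
  let ?S = "{the (E u v) n | u v. u \<in> V \<and> v \<in> V \<and> E u v \<noteq> None}"
  have "?S \<subseteq> (\<lambda>(u, v). the (E u v) n) ` (V \<times> V)" by auto
  then have "finite ?S" using fin by (meson finite_SigmaI finite_imageI finite_subset)
  moreover have "f n \<in> ?S" using assms by force
  ultimately have "f n \<le> kappa V E n" unfolding kappa_def by (rule Max_ge)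
  moreover have "f m \<le> f n" using mono assms(5) by (rule monoD)
  ultimately show ?thesis by simp
qed

lemma trans_props:
  assumes "t \<in> transitions V E n"
  shows "tsrc t \<in> configs V n" "tdst t \<in> configs V n"
    "\<And>l. l < n \<Longrightarrow> E (tsrc t l) (tdst t l) \<noteq> None"
  using assms by (cases t; auto simp: transitions_def tsrc_def tdst_def)+

lemma configs_mem: "c \<in> configs V n \<Longrightarrow> i < n \<Longrightarrow> c i \<in> V"
  unfolding configs_def by auto

lemma configs_finite: "finite V \<Longrightarrow> finite (configs V n)"
  unfolding configs_def by (simp add: finite_PiE)

lemma dev_finite: "finite V \<Longrightarrow> finite (dev V E n i c c')"
  by (rule finite_subset[OF _ configs_finite[of V n]]) (auto simp: dev_def transitions_def)

lemma Min_img_mono: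
  fixes f g :: "'a \<Rightarrow> 'b::linorder"
  assumes "finite A" "\<And>x. x \<in> A \<Longrightarrow> f x \<le> g x"
  shows "Min (f ` A) \<le> Min (g ` A)"
proof (cases "A = {}")
  case True then show ?thesis by simp
next
  case False
  then have "Min (g ` A) \<in> g ` A" using assms(1) by (intro Min_in) auto
  then obtain x where x: "x \<in> A" "Min (g ` A) = g x" by auto
  have "Min (f ` A) \<le> f x" using assms(1) x(1) by (intro Min_le) auto
  then show ?thesis using assms(2)[OF x(1)] x(2) by simp
qed

lemma Lambda_mono:
  assumes "\<And>i e. lam' i e \<le> lam i e"
  shows "Lambda V E tgt n lam' c \<subseteq> Lambda V E tgt n lam c"
  unfolding Lambda_def using assms order_trans by blast

lemma mu_mono:
  assumes "finite V"
  shows "mu V E tgt n j lam (Suc k) i e \<le> mu V E tgt n j lam k i e"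
proof (induction k arbitrary: i e)
  case 0
  then show ?case by simp
next
  case (Suc k)
  have sub: "\<And>c. Lambda V E tgt n (mu V E tgt n j lam (Suc k)) c \<subseteq> Lambda V E tgt n (mu V E tgt n j lam k) c"
    by (rule Lambda_mono) (rule Suc.IH)
  let ?A = "dev V E n i (tsrc e) (tdst e)"
  have fin: "finite ?A" using dev_finite[OF assms] .
  show ?case
  proof (cases "numtgt tgt n (tsrc e) \<ge> Suc j \<or> tsrc e i = tgt")
    case True then show ?thesis by auto
  next
    case nt: False
    show ?thesis
    proof (cases "\<forall>t\<in>transitions V E n. tsrc t = tsrc e \<longrightarrow>
                  Lambda V E tgt n (mu V E tgt n j lam (Suc k)) (tdst t) \<noteq> {}")
      case False
      have "mu V E tgt n j lam (Suc (Suc k)) i e = - \<infinity>"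
        unfolding mu.simps(2)[of V E tgt n j lam "Suc k"] using nt False by (simp only: if_False if_P) simp
      then show ?thesis by simp
    next
      case True
      then have True': "\<forall>t\<in>transitions V E n. tsrc t = tsrc e \<longrightarrow>
                  Lambda V E tgt n (mu V E tgt n j lam k) (tdst t) \<noteq> {}"
        using sub by blast
      have "Min ((\<lambda>c''. SUP \<rho>\<in>Lambda V E tgt n (mu V E tgt n j lam (Suc k)) c''.
                   ereal (real (step_cost E n (tsrc e) c'' i)) + path_cost i \<rho> 0) ` ?A)
          \<le> Min ((\<lambda>c''. SUP \<rho>\<in>Lambda V E tgt n (mu V E tgt n j lam k) c''.
                   ereal (real (step_cost E n (tsrc e) c'' i)) + path_cost i \<rho> 0) ` ?A)"
        by (rule Min_img_mono[OF fin]) (rule SUP_subset_mono[OF sub order_refl])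
      then show ?thesis using nt True True' by (simp only: mu.simps if_False if_True) simp
    qed
  qed
qed


lemma level_bound:
  assumes ar: "arena V E src tgt"
    and H: "\<And>t i. t \<in> transitions V E n \<Longrightarrow> i < n \<Longrightarrow> numtgt tgt n (tsrc t) \<ge> Suc j \<Longrightarrow>
             lam i t \<le> ereal (real (dst E tgt (tsrc t i) * kappa V E n))"
  shows "t \<in> transitions V E n \<Longrightarrow> i < n \<Longrightarrow> dst E tgt (tsrc t i) \<le> k \<Longrightarrow>
     mu V E tgt n j lam k i t \<le> ereal (real (dst E tgt (tsrc t i) * kappa V E n))"
proof (induction k arbitrary: t i)
  case 0
  have "tsrc t i \<in> V" using configs_mem[OF trans_props(1)[OF 0(1)] 0(2)] .
  then have "tsrc t i = tgt" using dst_zero[OF ar] 0(3) by auto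
  then show ?case using H[OF 0(1,2)] by auto
next
  case (Suc k)
  let ?c = "tsrc t" let ?v = "tsrc t i" let ?K = "kappa V E n"
  have vV: "?v \<in> V" using configs_mem[OF trans_props(1)[OF Suc(2)] Suc(3)] .
  have finV: "finite V" using ar unfolding arena_def by blast
  show ?case
  proof (cases "numtgt tgt n ?c \<ge> Suc j")
    case True then show ?thesis using H[OF Suc(2,3)] by simp
  next
    case nt: False
    show ?thesis
    proof (cases "?v = tgt")
      case True then show ?thesis using nt by simp
    next
      case nv: False
      show ?thesis
      proof (cases "\<forall>t'\<in>transitions V E n. tsrc t' = ?c \<longrightarrow>
                  Lambda V E tgt n (mu V E tgt n j lam k) (tdst t') \<noteq> {}")
        case False
        have "mu V E tgt n j lam (Suc k) i t = - \<infinity>"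
          unfolding mu.simps(2)[of V E tgt n j lam k] using nt nv False by (simp only: if_False if_P)
        then show ?thesis by simp
      next
        case cond: True
        obtain u where u: "E ?v u \<noteq> None" "u \<in> V" "Suc (dst E tgt u) \<le> dst E tgt ?v"
          using dst_step[OF ar vV nv] by blast
        define c'' where "c'' = (tdst t)(i := u)"
        have c''i: "c'' i = u" by (simp add: c''_def)
        have c''conf: "c'' \<in> configs V n"
          using trans_props(2)[OF Suc(2)] u(2) Suc(3)
          unfolding c''_def configs_def by (auto simp: PiE_def extensional_def)
        have edges: "\<forall>l\<in>{0..<n}. E (?c l) (c'' l) \<noteq> None"
          using trans_props(3)[OF Suc(2)] u(1) by (auto simp: c''_def)
        have "(?c, restrict (step_cost E n ?c c'') {0..<n}, c'') \<in> transitions V E n"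
          unfolding transitions_def using trans_props(1)[OF Suc(2)] c''conf edges by auto
        then have c''dev: "c'' \<in> dev V E n i ?c (tdst t)"
          unfolding dev_def c''_def by auto
        obtain f where f: "E ?v u = Some f" using u(1) by auto
        have ss: "{l\<in>{0..<n}. ?c l = ?c i \<and> c'' l = c'' i} \<subseteq> {0..<n}" by blast
        have "card {l\<in>{0..<n}. ?c l = ?c i \<and> c'' l = c'' i} \<le> n"
          using card_mono[OF finite_atLeastLessThan ss] by simp
        then have sc: "step_cost E n ?c c'' i \<le> ?K"
          unfolding step_cost_def using kappa_bound[OF ar vV u(2) f] f c''i by simp
        let ?F = "\<lambda>c''. SUP \<rho>\<in>Lambda V E tgt n (mu V E tgt n j lam k) c''.
                   ereal (real (step_cost E n ?c c'' i)) + path_cost i \<rho> 0"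
        have "Min (?F ` dev V E n i ?c (tdst t)) \<le> ?F c''"
          using dev_finite[OF finV] c''dev by (intro Min_le) auto
        also have "\<dots> \<le> ereal (real ?K) + ereal (real (dst E tgt u * ?K))"
        proof (rule SUP_least)
          fix \<rho> assume r: "\<rho> \<in> Lambda V E tgt n (mu V E tgt n j lam k) c''"
          then have p: "is_path V E n c'' \<rho>" and pc: "path_cost i \<rho> 0 \<le> mu V E tgt n j lam k i (\<rho> 0)"
            unfolding Lambda_def using Suc(3) by auto
          from p have r0: "\<rho> 0 \<in> transitions V E n" "tsrc (\<rho> 0) = c''" unfolding is_path_def by auto
          have "mu V E tgt n j lam k i (\<rho> 0) \<le> ereal (real (dst E tgt (tsrc (\<rho> 0) i) * ?K))"
            using Suc.IH[OF r0(1) Suc(3)] r0(2) c''i u(3) Suc(4) by simp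
          then have "path_cost i \<rho> 0 \<le> ereal (real (dst E tgt u * ?K))"
            using pc r0(2) c''i by simp
          moreover have "ereal (real (step_cost E n ?c c'' i)) \<le> ereal (real ?K)" using sc by simp
          ultimately show "ereal (real (step_cost E n ?c c'' i)) + path_cost i \<rho> 0
                 \<le> ereal (real ?K) + ereal (real (dst E tgt u * ?K))"
            by (intro add_mono) auto
        qed
        also have "\<dots> = ereal (real (Suc (dst E tgt u) * ?K))" by simp
        also have "\<dots> \<le> ereal (real (dst E tgt ?v * ?K))"
        proof -
          have m: "Suc (dst E tgt u) * ?K \<le> dst E tgt ?v * ?K" using u(3) by (rule mult_le_mono1)
          show ?thesis unfolding ereal_less_eq(3) of_nat_le_iff by (rule m)
        qed
        finally have fin: "Min (?F ` dev V E n i ?c (tdst t)) \<le> ereal (real (dst E tgt ?v * ?K))" .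
        have "mu V E tgt n j lam (Suc k) i t = Min (?F ` dev V E n i ?c (tdst t))"
          unfolding mu.simps(2)[of V E tgt n j lam k] using nt nv cond by (simp only: if_False if_True if_P)
        then show ?thesis using fin by simp
      qed
    qed
  qed
qed


lemma lamstar_aux_bound:
  assumes ar: "arena V E src tgt"
  shows "m \<le> n \<Longrightarrow> t \<in> transitions V E n \<Longrightarrow> i < n \<Longrightarrow> numtgt tgt n (tsrc t) \<ge> n - m \<Longrightarrow>
     lamstar_aux V E tgt n m i t \<le> ereal (real (dst E tgt (tsrc t i) * kappa V E n))"
proof (induction m arbitrary: t i)
  case 0
  then show ?case by simp
next
  case (Suc m)
  have finV: "finite V" using ar unfolding arena_def by blast
  let ?j = "n - Suc m"
  let ?X = "\<lambda>k. mu V E tgt n ?j (lamstar_aux V E tgt n m) k i t"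
  have H: "\<And>t i. t \<in> transitions V E n \<Longrightarrow> i < n \<Longrightarrow> numtgt tgt n (tsrc t) \<ge> Suc ?j \<Longrightarrow>
             lamstar_aux V E tgt n m i t \<le> ereal (real (dst E tgt (tsrc t i) * kappa V E n))"
    using Suc.IH Suc.prems(1) by (metis Suc_diff_Suc Suc_le_lessD Suc_leD)
  have dec: "decseq ?X" by (rule decseq_SucI) (rule mu_mono[OF finV])
  have "lamstar_aux V E tgt n (Suc m) i t = lim ?X" by simp
  also have "\<dots> = (INF k. ?X k)" by (rule limI[OF LIMSEQ_INF[OF dec]])
  also have "\<dots> \<le> ?X (card V)" by (rule INF_lower) simp
  also have "\<dots> \<le> ereal (real (dst E tgt (tsrc t i) * kappa V E n))"
  proof (rule level_bound[OF ar H Suc.prems(2,3)])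
    have "tsrc t i \<in> V" using configs_mem[OF trans_props(1)[OF Suc.prems(2)] Suc.prems(3)] .
    then show "dst E tgt (tsrc t i) \<le> card V" using dst_lt[OF ar] by (simp add: less_imp_le)
  qed
  finally show ?case .
qed

theorem lemmaC7:
  fixes V :: "'v set" and E :: "'v \<Rightarrow> 'v \<Rightarrow> (nat \<Rightarrow> nat) option"
    and src tgt :: 'v and n j i :: nat and e :: "'v trans"
  assumes "arena V E src tgt"
    and "j < n"
    and "e \<in> transitions V E n" and "numtgt tgt n (tsrc e) = j"
    and "i < n"
  shows "mu V E tgt n j (lamstar V E tgt n (Suc j)) (card V) i e
           \<le> ereal (real (card V * kappa V E n))"
proof -
  have H: "\<And>t i. t \<in> transitions V E n \<Longrightarrow> i < n \<Longrightarrow> numtgt tgt n (tsrc t) \<ge> Suc j \<Longrightarrow>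
             lamstar V E tgt n (Suc j) i t \<le> ereal (real (dst E tgt (tsrc t i) * kappa V E n))"
    unfolding lamstar_def using lamstar_aux_bound[OF assms(1)] assms(2)
    by (metis diff_diff_cancel diff_le_self Suc_leI)
  have vV: "tsrc e i \<in> V" using configs_mem[OF trans_props(1)[OF assms(3)] assms(5)] .
  have lt: "dst E tgt (tsrc e i) \<le> card V" using dst_lt[OF assms(1) vV] by simp
  have "mu V E tgt n j (lamstar V E tgt n (Suc j)) (card V) i e
        \<le> ereal (real (dst E tgt (tsrc e i) * kappa V E n))"
    by (rule level_bound[OF assms(1) H assms(3,5) lt])
  also have "\<dots> \<le> ereal (real (card V * kappa V E n))"
    unfolding ereal_less_eq(3) of_nat_le_iff using lt by (rule mult_le_mono1)
  finally show ?thesis .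
qed

end
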